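(* Let $\gamma\in(0,1)$, $c\in\mathbb{R}$, $\sigma^2>0$, and $\alpha_0\in(0,1]$. Define recursively, for $n\ge2$, $$\alpha_{n-1}=\frac{(1-\gamma)\lambda^{n-1}\sigma^2+\big(1-(1-\gamma)\delta^{n-1}\big)^2c^2}{(1-\gamma)^2\lambda^{n-1}\sigma^2+\big(1-(1-\gamma)\delta^{n-1}\big)^2c^2+\sigma^2},$$ where $\delta^1=\alpha_0$, $\lambda^1=\alpha_0^2$, and for $m>1$, $\delta^m=\alpha_{m-1}+(1-(1-\gamma)\alpha_{m-1})\delta^{m-1}$, $\lambda^m=\alpha_{m-1}^2+(1-(1-\gamma)\alpha_{m-1})^2\lambda^{m-1}$. Then $\lim_{n\to\infty}\alpha_{n-1}=0$.
   Context: The formula for $\alpha_{n-1}$ is the prediction-error-minimizing stepsize for approximate value iteration in a single-state, single-action problem with i.i.d. rewards of mean $c$, variance $\sigma^2$, and discount factor $\gamma$. *)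

theory Defs
  imports Complex_Main
begin

text \<open>vi_state g c s2 a0 k = (alpha_k, delta^(k+1), lambda^(k+1)), where s2 = sigma^2.\<close>
primrec vi_state :: "real \<Rightarrow> real \<Rightarrow> real \<Rightarrow> real \<Rightarrow> nat \<Rightarrow> real \<times> real \<times> real" where
  "vi_state g c s2 a0 0 = (a0, a0, a0^2)"
| "vi_state g c s2 a0 (Suc k) =
     (let (a, d, l) = vi_state g c s2 a0 k;
          a' = ((1 - g) * l * s2 + (1 - (1 - g) * d)^2 * c^2) /
               ((1 - g)^2 * l * s2 + (1 - (1 - g) * d)^2 * c^2 + s2)
      in (a', a' + (1 - (1 - g) * a') * d, a'^2 + (1 - (1 - g) * a')^2 * l))"

definition alpha :: "real \<Rightarrow> real \<Rightarrow> real \<Rightarrow> real \<Rightarrow> nat \<Rightarrow> real" where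
  "alpha g c s2 a0 k = fst (vi_state g c s2 a0 k)"

definition delta :: "real \<Rightarrow> real \<Rightarrow> real \<Rightarrow> real \<Rightarrow> nat \<Rightarrow> real" where
  "delta g c s2 a0 m = fst (snd (vi_state g c s2 a0 (m - 1)))"

definition lam :: "real \<Rightarrow> real \<Rightarrow> real \<Rightarrow> real \<Rightarrow> nat \<Rightarrow> real" where
  "lam g c s2 a0 m = snd (snd (vi_state g c s2 a0 (m - 1)))"

end

theory Submission
  imports Defs
begin

lemma key_poly:
  fixes a b s x y :: real
  assumes h: "a*s = b*x*(1-b*a) + y*(1-a)"
  shows "b*(s*a^2 + (1-b*a)^2*x) + (1-b*a)^2*y = a*(b^2*(s*a^2 + (1-b*a)^2*x) + (1-b*a)^2*y + s) - b*s*a^2"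
  using h by algebra

lemma vi_Suc_fst:
  "fst (vi_state g c s2 a0 (Suc k)) =
    ((1-g)*snd(snd(vi_state g c s2 a0 k))*s2 + (1-(1-g)*fst(snd(vi_state g c s2 a0 k)))^2*c^2) /
    ((1-g)^2*snd(snd(vi_state g c s2 a0 k))*s2 + (1-(1-g)*fst(snd(vi_state g c s2 a0 k)))^2*c^2 + s2)"
  by (cases "vi_state g c s2 a0 k") (simp add: Let_def)

lemma vi_Suc_d:
  "fst (snd (vi_state g c s2 a0 (Suc k))) = fst (vi_state g c s2 a0 (Suc k))
     + (1 - (1-g) * fst (vi_state g c s2 a0 (Suc k))) * fst(snd(vi_state g c s2 a0 k))"
  by (cases "vi_state g c s2 a0 k") (simp add: Let_def)

lemma vi_Suc_l:
  "snd (snd (vi_state g c s2 a0 (Suc k))) = (fst (vi_state g c s2 a0 (Suc k)))^2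
     + (1 - (1-g) * fst (vi_state g c s2 a0 (Suc k)))^2 * snd(snd(vi_state g c s2 a0 k))"
  by (cases "vi_state g c s2 a0 k") (simp add: Let_def)

theorem theorem4:
  fixes g c s2 a0 :: real
  assumes "0 < g" "g < 1" "0 < s2" "0 < a0" "a0 \<le> 1"
  shows "(\<lambda>n. alpha g c s2 a0 (n - 1)) \<longlonglongrightarrow> 0"
proof -
  define b where "b = 1 - g"
  have b0: "0 < b" and b1: "b < 1" using assms by (auto simp: b_def)
  have s0: "0 < s2" using assms by simp
  define A where "A k = alpha g c s2 a0 k" for k
  define Dd where "Dd k = fst (snd (vi_state g c s2 a0 k))" for k
  define X where "X k = s2 * snd (snd (vi_state g c s2 a0 k))" for k
  define Y where "Y k = (1 - b * Dd k)^2 * c^2" for k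
  define D where "D k = b^2 * X k + Y k + s2" for k
  have recA: "A (Suc k) = (b * X k + Y k) / D k" for k
    unfolding A_def alpha_def vi_Suc_fst X_def Y_def D_def Dd_def b_def
    by (simp add: mult.commute mult.left_commute)
  have recX: "X (Suc k) = s2 * A (Suc k)^2 + (1 - b * A (Suc k))^2 * X k" for k
    unfolding A_def alpha_def X_def b_def vi_Suc_l[of g c s2 a0 k]
    by (simp add: algebra_simps)
  have recY: "Y (Suc k) = (1 - b * A (Suc k))^2 * Y k" for k
  proof -
    have "1 - b * Dd (Suc k) = (1 - b * A (Suc k)) * (1 - b * Dd k)"
      unfolding A_def alpha_def Dd_def b_def vi_Suc_d[of g c s2 a0 k]
      by (simp add: algebra_simps)
    then show ?thesis unfolding Y_def by (simp add: power_mult_distrib)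
  qed
  have Y0: "0 \<le> Y k" for k unfolding Y_def by simp
  have Xpos: "0 < X k" for k
  proof (induction k)
    case 0
    then show ?case using assms unfolding X_def by simp
  next
    case (Suc k)
    have Dk: "0 < D k" unfolding D_def using Suc Y0[of k] s0 by (simp add: add_nonneg_pos)
    have "0 < A (Suc k)" unfolding recA using Suc Y0[of k] b0 Dk
      by (intro divide_pos_pos add_pos_nonneg mult_pos_pos) auto
    then have "0 < s2 * A (Suc k)^2" using s0 by simp
    moreover have "0 \<le> (1 - b * A (Suc k))^2 * X k" using Suc by simp
    ultimately show ?case unfolding recX by linarith
  qed
  have D0: "0 < D k" for k unfolding D_def using Xpos[of k] Y0[of k] s0 by (simp add: add_nonneg_pos)
  have Apos: "0 < A (Suc k)" for k unfolding recA using Xpos[of k] Y0[of k] b0 D0[of k]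
    by (intro divide_pos_pos add_pos_nonneg mult_pos_pos) auto
  have Ab: "b * A (Suc k) < 1" for k
  proof -
    have "b * Y k \<le> Y k" using b0 b1 Y0[of k] by (intro mult_left_le_one_le) auto
    then have "b * (b * X k + Y k) < D k" unfolding D_def using s0
      by (simp add: distrib_left power2_eq_square mult.assoc)
    then have "b * (b * X k + Y k) / D k < 1" using D0[of k] by (simp add: pos_divide_less_eq)
    then show ?thesis unfolding recA by simp
  qed
  have Ydec: "Y (Suc k) \<le> Y k" for k
  proof -
    have "(1 - b * A (Suc k))^2 \<le> 1" using Ab[of k] Apos[of k] b0
      by (intro power_le_one) (auto simp: less_imp_le)
    then show ?thesis unfolding recY using Y0[of k] by (simp add: mult_left_le_one_le)
  qed
  have YY0: "Y k \<le> Y 0" for k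
    by (induction k) (use Ydec order_trans in blast)+
  have key: "A (Suc (Suc k)) = A (Suc k) - b * s2 * A (Suc k)^2 / D (Suc k)" for k
  proof -
    have h: "A (Suc k) * s2 = b * X k * (1 - b * A (Suc k)) + Y k * (1 - A (Suc k))"
    proof -
      have "A (Suc k) * D k = b * X k + Y k" unfolding recA using D0[of k] by simp
      then show ?thesis unfolding D_def by (simp add: algebra_simps power2_eq_square)
    qed
    have "b * X (Suc k) + Y (Suc k) = A (Suc k) * D (Suc k) - b * s2 * A (Suc k)^2"
      unfolding D_def recX recY using key_poly[OF h] by simp
    then have "A (Suc (Suc k)) = (A (Suc k) * D (Suc k) - b * s2 * A (Suc k)^2) / D (Suc k)"
      unfolding recA[of "Suc k"] by simp
    also have "\<dots> = A (Suc k) - b * s2 * A (Suc k)^2 / D (Suc k)"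
      using D0[of "Suc k"] by (simp add: diff_divide_distrib)
    finally show ?thesis .
  qed
  have Ale1: "A (Suc k) \<le> 1" for k
  proof (induction k)
    case 0
    have "b * (1 - b) \<le> b" using b0 b1 by (intro mult_left_le) auto
    then have "b * (1 - b) \<le> 1" using b1 by linarith
    moreover have "a0^2 \<le> 1" using assms by (simp add: power_le_one)
    ultimately have "b * (1-b) * a0^2 \<le> 1" using b0 b1
    proof -
      have "b * (1-b) * a0^2 \<le> b * (1-b) * 1"
        by (rule mult_left_mono) (use b0 b1 \<open>a0^2 \<le> 1\<close> in auto)
      then show ?thesis using \<open>b * (1 - b) \<le> 1\<close> by simp
    qed
    then have "b * (1-b) * (s2 * a0^2) \<le> s2" using s0
      using mult_right_mono[of "b * (1-b) * a0^2" 1 s2] by (simp add: mult_ac)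
    then have "b * X 0 + Y 0 \<le> D 0" unfolding D_def X_def
      by (simp add: algebra_simps power2_eq_square)
    then show ?case unfolding recA using D0[of 0] by simp
  next
    case (Suc k)
    have "0 \<le> b * s2 * A (Suc k)^2 / D (Suc k)" using b0 s0 D0[of "Suc k"] by simp
    then show ?case using key[of k] Suc by simp
  qed
  have Xb: "X k \<le> s2 / (b * (1 - b))" for k
  proof -
    have "b * X k + Y k \<le> D k" using Ale1[of k] D0[of k] unfolding recA by simp
    then have "b * (1 - b) * X k \<le> s2" unfolding D_def by (simp add: algebra_simps power2_eq_square)
    moreover have "0 < b * (1 - b)" using b0 b1 by simp
    ultimately show ?thesis by (simp add: pos_le_divide_eq mult.commute)
  qed
  define M where "M = b^2 * (s2 / (b * (1 - b))) + Y 0 + s2"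
  have DM: "D k \<le> M" for k
  proof -
    have "b^2 * X k \<le> b^2 * (s2 / (b * (1 - b)))"
      by (rule mult_left_mono) (use Xb[of k] in auto)
    then show ?thesis unfolding D_def M_def using YY0[of k] by linarith
  qed
  have M0: "0 < M" using D0[of 0] DM[of 0] by simp
  define c0 where "c0 = b * s2 / M"
  have c00: "0 < c0" unfolding c0_def using b0 s0 M0 by simp
  have step: "A (Suc (Suc k)) \<le> A (Suc k) - c0 * A (Suc k)^2" for k
  proof -
    have "b * s2 * A (Suc k)^2 / M \<le> b * s2 * A (Suc k)^2 / D (Suc k)"
      using D0[of "Suc k"] DM[of "Suc k"] b0 s0 by (intro divide_left_mono) auto
    then show ?thesis using key[of k] unfolding c0_def by simp
  qed
  define B where "B n = A (Suc n)" for n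
  have "decseq B" unfolding B_def
  proof (rule decseq_SucI)
    fix n
    have "0 \<le> c0 * A (Suc n)^2" using c00 by simp
    then show "A (Suc (Suc n)) \<le> A (Suc n)" using step[of n] by linarith
  qed
  moreover have "\<forall>i. 0 \<le> B i" unfolding B_def using Apos by (simp add: less_imp_le)
  ultimately obtain L where L: "B \<longlonglongrightarrow> L" "\<forall>i. L \<le> B i" by (rule decseq_convergent)
  have L1: "(\<lambda>n. B (Suc n)) \<longlonglongrightarrow> L" using L(1) by (rule LIMSEQ_Suc)
  have L2: "(\<lambda>n. B n - c0 * (B n)^2) \<longlonglongrightarrow> L - c0 * L^2"
    by (intro tendsto_intros L(1))
  have "L \<le> L - c0 * L^2"
    by (rule LIMSEQ_le[OF L1 L2]) (use step in \<open>auto simp: B_def\<close>)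
  then have "c0 * L^2 \<le> 0" by linarith
  then have "L^2 \<le> 0" using c00 by (simp add: mult_le_0_iff)
  then have "L = 0" by simp
  then have "B \<longlonglongrightarrow> 0" using L(1) by simp
  then have "(\<lambda>n. A (Suc n)) \<longlonglongrightarrow> 0" unfolding B_def .
  then have "A \<longlonglongrightarrow> 0" by (rule filterlim_sequentially_Suc[THEN iffD1])
  then have "(\<lambda>n. A (Suc n - 1)) \<longlonglongrightarrow> 0" by simp
  then have "(\<lambda>n. A (n - 1)) \<longlonglongrightarrow> 0" by (rule filterlim_sequentially_Suc[THEN iffD1])
  then show ?thesis unfolding A_def .
qed

end
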